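(* Let $u:\mathbb{H}^1\to\mathbb{R}$ be a smooth pluriharmonic function such that the $Q'$-curvature of $(\mathbb{H}^1,e^u\theta)$ satisfies $Q'\ge 0$, the metric is normal, i.e. $$u(x)=\frac{1}{c'_1}\int_{\mathbb{H}^1}\log\frac{\rho(y)}{\rho(y^{-1}x)}\,Q'(y)e^{4u(y)}\,dv(y)+C$$ for some constant $C$, and $$\int_{\mathbb{H}^1} Q' e^{4u}\,\theta\wedge d\theta<c'_1 .$$ Then $e^{4u}$ is an $A_1$ weight on $\mathbb{H}^1$.
   Context: $\mathbb{H}^1=\mathbb{C}\times\mathbb{R}$ with coordinates $(z,t)$, $z=x+iy$, group law $(z,t)\cdot(w,s)=(z+w,\,t+s+2\,\mathrm{Im}(z\bar w))$, left-invariant vector fields $X=\partial_x+2y\partial_t$, $Y=\partial_y-2x\partial_t$, standard contact form $\theta=dt+2(x\,dy-y\,dx)$, and $dv=\theta\wedge d\theta$. $\Delta_b=X^2+Y^2$. A real function is pluriharmonic if locally it is the real part of a CR function $f$ ($(X+iY)f=0$). On $\mathbb{H}^1$, $P'u=2\Delta_b^2u$ and the $Q'$-curvature of $e^u\theta$ ($u$ pluriharmonic) is defined by $P'u=Q'e^{4u}$. The homogeneous norm is $\rho(z,t)=(|z|^4+t^2)^{1/4}$; $c'_1>0$ is the constant such that $\frac{1}{c'_1}\log\frac{1}{\rho(q^{-1}p)}$ is the fundamental solution of $P'$ on pluriharmonic functions. Balls are $B(x,r)=\{y:\rho(x^{-1}y)<r\}$. A nonnegative locally integrable function $\omega$ is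 an $A_1$ weight if there is $C_0$ such that for every ball $B$, $\frac{1}{|B|}\int_B\omega\,dv\le C_0\inf_{B}\omega$ (equivalently, the Hardy–Littlewood maximal function satisfies $M\omega\le C_0\omega$ a.e.), where $|B|$ is the Haar measure of $B$. *)

theory Defs
  imports "HOL-Analysis.Analysis"
begin

text \<open>The Heisenberg group H^1 = C x R, modelled as real x real x real with coordinates (x,y,t),
  z = x + i y.\<close>

type_synonym heis = "real \<times> real \<times> real"

definition hmult :: "heis \<Rightarrow> heis \<Rightarrow> heis" where
  "hmult p q = (case p of (x1, y1, t1) \<Rightarrow> case q of (x2, y2, t2) \<Rightarrow>
      (x1 + x2, y1 + y2, t1 + t2 + 2 * (y1 * x2 - x1 * y2)))"
  \<comment> \<open>2 Im(z \<bar>w\<bar>) with z = x1 + i y1, w = x2 + i y2 equals 2 (y1 x2 - x1 y2)\<close>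

definition hinv :: "heis \<Rightarrow> heis" where
  "hinv p = (case p of (x, y, t) \<Rightarrow> (-x, -y, -t))"

definition hnorm :: "heis \<Rightarrow> real" where
  "hnorm p = (case p of (x, y, t) \<Rightarrow> ((x\<^sup>2 + y\<^sup>2)\<^sup>2 + t\<^sup>2) powr (1/4))"

definition hball :: "heis \<Rightarrow> real \<Rightarrow> heis set" where
  "hball p r = {q. hnorm (hmult (hinv p) q) < r}"

text \<open>Volume form dv = theta /\ d theta = 4 dx dy dt (Haar measure).\<close>
definition hvol :: "heis measure" where
  "hvol = density lborel (\<lambda>_. ennreal 4)"

definition ex :: heis where "ex = (1, 0, 0)"
definition ey :: heis where "ey = (0, 1, 0)"
definition et :: heis where "et = (0, 0, 1)"

definition pd :: "heis \<Rightarrow> (heis \<Rightarrow> 'b::real_normed_vector) \<Rightarrow> heis \<Rightarrow> 'b" where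
  "pd v f p = frechet_derivative f (at p) v"

fun iter_pd :: "heis list \<Rightarrow> (heis \<Rightarrow> 'b::real_normed_vector) \<Rightarrow> heis \<Rightarrow> 'b" where
  "iter_pd [] f = f"
| "iter_pd (v # vs) f = pd v (iter_pd vs f)"

definition smooth_heis :: "(heis \<Rightarrow> 'b::real_normed_vector) \<Rightarrow> bool" where
  "smooth_heis f \<longleftrightarrow> (\<forall>vs p. iter_pd vs f differentiable (at p))"

definition Xop :: "(heis \<Rightarrow> 'b::real_normed_vector) \<Rightarrow> heis \<Rightarrow> 'b" where
  "Xop f p = pd ex f p + (2 * fst (snd p)) *\<^sub>R pd et f p"

definition Yop :: "(heis \<Rightarrow> 'b::real_normed_vector) \<Rightarrow> heis \<Rightarrow> 'b" where
  "Yop f p = pd ey f p - (2 * fst p) *\<^sub>R pd et f p"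

definition sublap :: "(heis \<Rightarrow> real) \<Rightarrow> heis \<Rightarrow> real" where
  "sublap f p = Xop (Xop f) p + Yop (Yop f) p"

definition Pprime :: "(heis \<Rightarrow> real) \<Rightarrow> heis \<Rightarrow> real" where
  "Pprime u p = 2 * sublap (sublap u) p"

definition Qprime :: "(heis \<Rightarrow> real) \<Rightarrow> heis \<Rightarrow> real" where
  "Qprime u p = Pprime u p / exp (4 * u p)"

definition CR_on :: "heis set \<Rightarrow> (heis \<Rightarrow> complex) \<Rightarrow> bool" where
  "CR_on U f \<longleftrightarrow> (\<forall>q\<in>U. f differentiable (at q) \<and> Xop f q + \<i> * Yop f q = 0)"

definition pluriharmonic :: "(heis \<Rightarrow> real) \<Rightarrow> bool" where
  "pluriharmonic u \<longleftrightarrow> (\<forall>p. \<exists>U f. open U \<and> p \<in> U \<and> CR_on U f \<and> (\<forall>q\<in>U. Re (f q) = u q))"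

definition A1_weight :: "(heis \<Rightarrow> real) \<Rightarrow> bool" where
  "A1_weight w \<longleftrightarrow>
     (\<forall>p. 0 \<le> w p) \<and>
     (\<forall>K. compact K \<longrightarrow> set_integrable hvol K w) \<and>
     (\<exists>C0. \<forall>p r. 0 < r \<longrightarrow>
        (set_lebesgue_integral hvol (hball p r) w) / measure hvol (hball p r)
          \<le> C0 * (INF q\<in>hball p r. w q))"

end

theory Submission
  imports Defs
begin


definition NN :: "heis \<Rightarrow> real" where
  "NN p = (case p of (x, y, t) \<Rightarrow> (x\<^sup>2 + y\<^sup>2)\<^sup>2 + t\<^sup>2)"

lemma NN_nonneg: "0 \<le> NN p"
  by (cases p) (simp add: NN_def)

lemma powr_quarter: "0 \<le> (x::real) \<Longrightarrow> x powr (1/4) = sqrt (sqrt x)"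
proof -
  assume x: "0 \<le> x"
  have "sqrt (sqrt x) = (x powr (1/2)) powr (1/2)"
    using x by (simp add: powr_half_sqrt)
  also have "\<dots> = x powr (1/4)" using x by (simp add: powr_powr)
  finally show ?thesis by simp
qed

lemma hnorm_NN: "hnorm p = sqrt (sqrt (NN p))"
  using powr_quarter[OF NN_nonneg[of p]] by (auto simp: hnorm_def NN_def split: prod.splits)

lemma hnorm_nonneg: "0 \<le> hnorm p"
  by (simp add: hnorm_NN NN_nonneg)

lemma hnorm_zero_iff: "hnorm p = 0 \<longleftrightarrow> p = 0"
proof -
  obtain x y t where p: "p = (x,y,t)" by (cases p) auto
  have "hnorm p = 0 \<longleftrightarrow> (x\<^sup>2 + y\<^sup>2)\<^sup>2 + t\<^sup>2 = 0" by (simp add: hnorm_NN NN_def p)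
  also have "\<dots> \<longleftrightarrow> x\<^sup>2 + y\<^sup>2 = 0 \<and> t = 0" by (simp add: add_nonneg_eq_0_iff)
  also have "\<dots> \<longleftrightarrow> p = 0" by (simp add: add_nonneg_eq_0_iff p zero_prod_def)
  finally show ?thesis .
qed

lemma hnorm_pos: "p \<noteq> 0 \<Longrightarrow> 0 < hnorm p"
  using hnorm_nonneg[of p] hnorm_zero_iff[of p] by linarith

lemma hnorm_hinv: "hnorm (hinv p) = hnorm p"
  by (auto simp: hnorm_def hinv_def split: prod.splits)

lemma hmult_assoc_d: "hmult (hinv a) c = hmult (hmult (hinv a) b) (hmult (hinv b) c)"
proof -
  obtain a1 a2 a3 where a: "a = (a1,a2,a3)" by (cases a) auto
  obtain b1 b2 b3 where b: "b = (b1,b2,b3)" by (cases b) auto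
  obtain c1 c2 c3 where c: "c = (c1,c2,c3)" by (cases c) auto
  show ?thesis by (simp add: a b c hmult_def hinv_def algebra_simps)
qed

lemma hinv_d: "hinv (hmult (hinv a) b) = hmult (hinv b) a"
proof -
  obtain a1 a2 a3 where a: "a = (a1,a2,a3)" by (cases a) auto
  obtain b1 b2 b3 where b: "b = (b1,b2,b3)" by (cases b) auto
  show ?thesis by (simp add: a b hmult_def hinv_def algebra_simps)
qed

lemma hnorm_triangle: "hnorm (hmult p q) \<le> hnorm p + hnorm q"
proof -
  obtain a b s where p: "p = (a,b,s)" by (cases p) auto
  obtain c d t where q: "q = (c,d,t)" by (cases q) auto
  define P where "P = hnorm p"
  define Q where "Q = hnorm q"
  have P0: "0 \<le> P" "0 \<le> Q" by (simp_all add: P_def Q_def hnorm_nonneg)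
  let ?A = "Complex (a\<^sup>2+b\<^sup>2) s" and ?B = "Complex (c\<^sup>2+d\<^sup>2) t"
    and ?Z = "Complex (2*(a*c+b*d)) (2*(b*c-a*d))"
  have sum: "?A + ?B + ?Z = Complex ((a+c)\<^sup>2+(b+d)\<^sup>2) (s+t+2*(b*c-a*d))"
    by (simp add: complex_eq_iff power2_eq_square algebra_simps)
  have nA: "cmod ?A = P\<^sup>2" by (simp add: cmod_def P_def hnorm_NN NN_def p)
  have nB: "cmod ?B = Q\<^sup>2" by (simp add: cmod_def Q_def hnorm_NN NN_def q)
  have zab: "sqrt (a\<^sup>2+b\<^sup>2) \<le> P"
  proof -
    have "(a\<^sup>2+b\<^sup>2)\<^sup>2 \<le> (a\<^sup>2+b\<^sup>2)\<^sup>2 + s\<^sup>2" by simp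
    hence "a\<^sup>2+b\<^sup>2 \<le> sqrt ((a\<^sup>2+b\<^sup>2)\<^sup>2 + s\<^sup>2)"
      by (metis real_le_rsqrt)
    thus ?thesis unfolding P_def hnorm_NN NN_def p by (simp add: real_sqrt_le_mono)
  qed
  have zcd: "sqrt (c\<^sup>2+d\<^sup>2) \<le> Q"
  proof -
    have "(c\<^sup>2+d\<^sup>2)\<^sup>2 \<le> (c\<^sup>2+d\<^sup>2)\<^sup>2 + t\<^sup>2" by simp
    hence "c\<^sup>2+d\<^sup>2 \<le> sqrt ((c\<^sup>2+d\<^sup>2)\<^sup>2 + t\<^sup>2)"
      by (metis real_le_rsqrt)
    thus ?thesis unfolding Q_def hnorm_NN NN_def q by (simp add: real_sqrt_le_mono)
  qed
  have nZ: "cmod ?Z = 2 * sqrt (a\<^sup>2+b\<^sup>2) * sqrt (c\<^sup>2+d\<^sup>2)"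
  proof -
    have "(2*(a*c+b*d))\<^sup>2 + (2*(b*c-a*d))\<^sup>2 = 4 * ((a\<^sup>2+b\<^sup>2) * (c\<^sup>2+d\<^sup>2))"
      by (simp add: power2_eq_square algebra_simps)
    thus ?thesis by (simp add: cmod_def real_sqrt_mult)
  qed
  have "cmod (?A + ?B + ?Z) \<le> cmod ?A + cmod ?B + cmod ?Z"
    by (meson add_mono norm_triangle_ineq order_trans order_refl)
  also have "\<dots> \<le> P\<^sup>2 + Q\<^sup>2 + 2 * P * Q"
    using nA nB nZ zab zcd P0 by (simp add: mult_mono)
  also have "\<dots> = (P + Q)\<^sup>2" by (simp add: power2_eq_square algebra_simps)
  moreover have "cmod (?A + ?B + ?Z) = sqrt (NN (hmult p q))"
    by (simp only: sum) (simp add: cmod_def NN_def hmult_def p q)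
  ultimately have le: "sqrt (NN (hmult p q)) \<le> (P+Q)\<^sup>2" by simp
  have "hnorm (hmult p q) = sqrt (sqrt (NN (hmult p q)))" by (simp add: hnorm_NN)
  also have "\<dots> \<le> sqrt ((P+Q)\<^sup>2)" by (rule real_sqrt_le_mono[OF le])
  also have "\<dots> = P + Q" using P0 by simp
  finally show ?thesis by (simp add: P_def Q_def)
qed

definition hdist :: "heis \<Rightarrow> heis \<Rightarrow> real" where
  "hdist a b = hnorm (hmult (hinv a) b)"

lemma hd_sym: "hdist a b = hdist b a"
  by (metis hdist_def hinv_d hnorm_hinv)

lemma hd_tri: "hdist a c \<le> hdist a b + hdist b c"
  unfolding hdist_def by (metis hmult_assoc_d hnorm_triangle)

lemma hd_nonneg: "0 \<le> hdist a b" by (simp add: hdist_def hnorm_nonneg)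

lemma hd_zero_iff: "hdist a b = 0 \<longleftrightarrow> a = b"
  by (auto simp: hdist_def hnorm_zero_iff hmult_def hinv_def zero_prod_def split: prod.splits)

lemma hd_self: "hdist a a = 0" by (simp add: hd_zero_iff)



lemma borel_prod_lb: "(f :: 'a::euclidean_space \<times> 'b::euclidean_space \<Rightarrow> ennreal) \<in> borel_measurable borel
   \<Longrightarrow> f \<in> borel_measurable (lborel \<Otimes>\<^sub>M lborel)"
  by (simp add: lborel_prod)

lemma nn2: fixes h :: "'a::euclidean_space \<times> 'b::euclidean_space \<Rightarrow> ennreal"
  assumes "h \<in> borel_measurable borel"
  shows "(\<integral>\<^sup>+x. h x \<partial>lborel) = (\<integral>\<^sup>+a. \<integral>\<^sup>+b. h (a,b) \<partial>lborel \<partial>lborel)"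
proof -
  have "(\<integral>\<^sup>+x. h x \<partial>lborel) = (\<integral>\<^sup>+x. h x \<partial>(lborel \<Otimes>\<^sub>M lborel))"
    by (simp only: lborel_prod)
  also have "\<dots> = (\<integral>\<^sup>+a. \<integral>\<^sup>+b. h (a,b) \<partial>lborel \<partial>lborel)"
    by (rule lborel.nn_integral_fst[symmetric]) (rule borel_prod_lb[OF assms])
  finally show ?thesis .
qed

lemma nn3: fixes h :: "heis \<Rightarrow> ennreal"
  assumes [measurable]: "h \<in> borel_measurable borel"
  shows "(\<integral>\<^sup>+x. h x \<partial>lborel) = (\<integral>\<^sup>+a. \<integral>\<^sup>+b. \<integral>\<^sup>+c. h (a,b,c) \<partial>lborel \<partial>lborel \<partial>lborel)"
proof -
  have "(\<integral>\<^sup>+x. h x \<partial>lborel) = (\<integral>\<^sup>+a. \<integral>\<^sup>+y. h (a,y) \<partial>lborel \<partial>lborel)"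
    by (rule nn2) measurable
  also have "\<dots> = (\<integral>\<^sup>+a. \<integral>\<^sup>+b. \<integral>\<^sup>+c. h (a,b,c) \<partial>lborel \<partial>lborel \<partial>lborel)"
    by (rule nn_integral_cong, rule nn2) measurable
  finally show ?thesis .
qed

lemma shift_real: fixes f :: "real \<Rightarrow> ennreal"
  assumes "f \<in> borel_measurable borel"
  shows "(\<integral>\<^sup>+x. f (t + x) \<partial>lborel) = (\<integral>\<^sup>+x. f x \<partial>lborel)"
  using nn_integral_real_affine[OF assms, of 1 t] by simp

lemma hmult_cont: "continuous_on UNIV (\<lambda>x. hmult a x)"
  unfolding hmult_def by (cases a) (simp add: case_prod_beta', intro continuous_intros)

lemma hmult_meas[measurable]: "(\<lambda>x. hmult a x) \<in> borel_measurable borel"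
  by (rule borel_measurable_continuous_onI[OF hmult_cont])

lemma transl_lborel: fixes h :: "heis \<Rightarrow> ennreal"
  assumes [measurable]: "h \<in> borel_measurable borel"
  shows "(\<integral>\<^sup>+x. h (hmult a x) \<partial>lborel) = (\<integral>\<^sup>+x. h x \<partial>lborel)"
proof -
  obtain a1 a2 a3 where a: "a = (a1,a2,a3)" by (cases a) auto
  have "(\<integral>\<^sup>+x. h (hmult a x) \<partial>lborel) =
     (\<integral>\<^sup>+x1. \<integral>\<^sup>+x2. \<integral>\<^sup>+x3. h (a1+x1, a2+x2, (a3 + 2*(a2*x1 - a1*x2)) + x3) \<partial>lborel \<partial>lborel \<partial>lborel)"
    by (subst nn3) (measurable, simp add: a hmult_def algebra_simps)
  also have "\<dots> = (\<integral>\<^sup>+x1. \<integral>\<^sup>+x2. \<integral>\<^sup>+x3. h (a1+x1, a2+x2, x3) \<partial>lborel \<partial>lborel \<partial>lborel)"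
    by (intro nn_integral_cong shift_real) measurable
  also have "\<dots> = (\<integral>\<^sup>+x1. \<integral>\<^sup>+x2. \<integral>\<^sup>+x3. h (a1+x1, x2, x3) \<partial>lborel \<partial>lborel \<partial>lborel)"
    by (intro nn_integral_cong shift_real[where f="\<lambda>x2. \<integral>\<^sup>+x3. h (_, x2, x3) \<partial>lborel"]) measurable
  also have "\<dots> = (\<integral>\<^sup>+x1. \<integral>\<^sup>+x2. \<integral>\<^sup>+x3. h (x1, x2, x3) \<partial>lborel \<partial>lborel \<partial>lborel)"
    by (intro nn_integral_cong shift_real[where f="\<lambda>x1. \<integral>\<^sup>+x2. \<integral>\<^sup>+x3. h (x1, x2, x3) \<partial>lborel \<partial>lborel"]) measurable
  also have "\<dots> = (\<integral>\<^sup>+x. h x \<partial>lborel)" by (subst nn3) simp_all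
  finally show ?thesis .
qed



lemma NN_cont: "continuous_on UNIV NN"
  unfolding NN_def by (simp add: case_prod_beta', intro continuous_intros)

lemma hnorm_fun: "hnorm = (\<lambda>p. sqrt (sqrt (NN p)))"
  by (rule ext) (simp add: hnorm_NN)

lemma hnorm_cont: "continuous_on UNIV hnorm"
  unfolding hnorm_fun by (intro continuous_intros NN_cont)

lemma hnorm_meas[measurable]: "hnorm \<in> borel_measurable borel"
  by (rule borel_measurable_continuous_onI[OF hnorm_cont])

lemma hnorm_pow4: "hnorm p ^ 4 = NN p"
proof -
  have "hnorm p ^ 4 = ((sqrt (sqrt (NN p)))\<^sup>2)\<^sup>2" by (simp add: hnorm_NN power_mult[symmetric])
  also have "\<dots> = NN p" using NN_nonneg[of p] by simp
  finally show ?thesis .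
qed

lemma hnorm_less_iff: "0 < R \<Longrightarrow> hnorm p < R \<longleftrightarrow> NN p < R^4"
proof -
  assume R: "0 < R"
  have "hnorm p < R \<longleftrightarrow> hnorm p ^ 4 < R ^ 4"
    using power_mono_iff[of R "hnorm p" 4] hnorm_nonneg[of p] R by (simp add: not_le[symmetric])
  thus ?thesis by (simp add: hnorm_pow4)
qed

lemma box_measure:
  assumes "a1 \<le> b1" "a2 \<le> b2" "a3 \<le> b3"
  shows "emeasure (lborel::heis measure) ({a1..b1} \<times> {a2..b2} \<times> {a3..b3}) = ennreal ((b1-a1)*(b2-a2)*(b3-a3))"
proof -
  have "emeasure (lborel::heis measure) ({a1..b1} \<times> {a2..b2} \<times> {a3..b3})
      = emeasure (lborel \<Otimes>\<^sub>M lborel) ({a1..b1} \<times> ({a2..b2} \<times> {a3..b3}))"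
    by (simp only: lborel_prod)
  also have "\<dots> = emeasure lborel {a1..b1} * emeasure lborel ({a2..b2} \<times> {a3..b3})"
    by (rule lborel.emeasure_pair_measure_Times) (auto intro!: borel_closed closed_Times)
  also have "emeasure (lborel :: (real\<times>real) measure) ({a2..b2} \<times> {a3..b3}) =
      emeasure (lborel \<Otimes>\<^sub>M lborel) ({a2..b2} \<times> {a3..b3})"
    by (simp only: lborel_prod)
  also have "\<dots> = emeasure lborel {a2..b2} * emeasure lborel {a3..b3}"
    by (rule lborel.emeasure_pair_measure_Times) (auto intro!: borel_closed closed_Times)
  finally show ?thesis using assms by (simp add: ennreal_mult mult.assoc)
qed

lemma ball_upper:
  assumes R: "0 < R"
  shows "emeasure (lborel::heis measure) {x. hnorm x < R} \<le> ennreal (8 * R^4)"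
proof -
  have sub: "{x. hnorm x < R} \<subseteq> {-R..R} \<times> {-R..R} \<times> {-(R\<^sup>2)..R\<^sup>2}"
  proof
    fix x assume "x \<in> {x. hnorm x < R}"
    then obtain a b c where x: "x = (a,b,c)" and lt: "(a\<^sup>2+b\<^sup>2)\<^sup>2 + c\<^sup>2 < R^4"
      using hnorm_less_iff[OF R] by (cases x) (auto simp: NN_def)
    have ab: "(a\<^sup>2+b\<^sup>2)\<^sup>2 < (R\<^sup>2)\<^sup>2" using lt by (simp add: power_mult[symmetric] add_nonneg_nonneg
         order_le_less_trans[of "(a\<^sup>2+b\<^sup>2)\<^sup>2" "(a\<^sup>2+b\<^sup>2)\<^sup>2 + c\<^sup>2"])
    hence ab2: "a\<^sup>2+b\<^sup>2 < R\<^sup>2" by (metis power_less_imp_less_base zero_le_power2)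
    hence "a\<^sup>2 < R\<^sup>2" "b\<^sup>2 < R\<^sup>2" by (smt (verit) zero_le_power2)+
    hence "\<bar>a\<bar> < R" "\<bar>b\<bar> < R" using R by (simp_all add: power2_less_imp_less abs_less_iff
        real_sqrt_less_mono flip: real_sqrt_abs) 
    moreover have "c\<^sup>2 < (R\<^sup>2)\<^sup>2" using lt by (simp add: power_mult[symmetric]
         order_le_less_trans[of "c\<^sup>2" "(a\<^sup>2+b\<^sup>2)\<^sup>2 + c\<^sup>2"])
    hence "\<bar>c\<bar> < R\<^sup>2" using R by (metis abs_power2 abs_le_self_iff power2_less_imp_less zero_le_power2 abs_ge_zero power2_abs)
    ultimately show "x \<in> {-R..R} \<times> {-R..R} \<times> {-(R\<^sup>2)..R\<^sup>2}" by (auto simp: x abs_less_iff)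
  qed
  have "emeasure (lborel::heis measure) {x. hnorm x < R} \<le> emeasure lborel ({-R..R} \<times> {-R..R} \<times> {-(R\<^sup>2)..R\<^sup>2})"
    by (rule emeasure_mono[OF sub]) (simp, intro borel_closed closed_Times closed_atLeastAtMost)
  also have "\<dots> = ennreal ((R - -R)*(R - -R)*(R\<^sup>2 - -(R\<^sup>2)))"
    using R by (intro box_measure) auto
  also have "(R - -R)*(R - -R)*(R\<^sup>2 - -(R\<^sup>2)) = 8 * R^4" by (simp add: power2_eq_square power4_eq_xxxx)
  finally show ?thesis .
qed

lemma ball_lower:
  assumes R: "0 < R"
  shows "ennreal (R^4) \<le> emeasure (lborel::heis measure) {x. hnorm x < R}"
proof -
  let ?B = "{-(R/2)..R/2} \<times> {-(R/2)..R/2} \<times> {-(R\<^sup>2/2)..R\<^sup>2/2}"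
  have sub: "?B \<subseteq> {x. hnorm x < R}"
  proof
    fix x assume "x \<in> ?B"
    then obtain a b c where x: "x = (a,b,c)" and a: "\<bar>a\<bar> \<le> R/2" and b: "\<bar>b\<bar> \<le> R/2" and c: "\<bar>c\<bar> \<le> R\<^sup>2/2"
      by (cases x) (auto simp: abs_le_iff)
    have "a\<^sup>2 \<le> (R/2)\<^sup>2" using a by (metis abs_ge_zero power2_abs power_mono)
    moreover have "b\<^sup>2 \<le> (R/2)\<^sup>2" using b by (metis abs_ge_zero power2_abs power_mono)
    ultimately have "a\<^sup>2 + b\<^sup>2 \<le> R\<^sup>2/2" by (simp add: power_divide)
    hence "(a\<^sup>2 + b\<^sup>2)\<^sup>2 \<le> (R\<^sup>2/2)\<^sup>2" by (simp add: power_mono)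
    moreover have "c\<^sup>2 \<le> (R\<^sup>2/2)\<^sup>2" using c by (metis abs_ge_zero power2_abs power_mono)
    ultimately have "NN x \<le> R^4/2" by (simp add: NN_def x power_divide power_mult[symmetric])
    also have "\<dots> < R^4" using R by simp
    finally show "x \<in> {x. hnorm x < R}" using hnorm_less_iff[OF R] by simp
  qed
  have "ennreal (R^4) = ennreal ((R/2 - -(R/2))*(R/2 - -(R/2))*(R\<^sup>2/2 - -(R\<^sup>2/2)))"
    by (simp add: power2_eq_square power4_eq_xxxx mult.assoc)
  also have "\<dots> = emeasure lborel ?B" using R by (intro box_measure[symmetric]) auto
  also have "\<dots> \<le> emeasure lborel {x. hnorm x < R}" by (rule emeasure_mono[OF sub]) measurable
  finally show ?thesis .
qed



lemma ennreal_term_le_suminf: "(f::nat\<Rightarrow>ennreal) k \<le> suminf f"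
  using sum_le_suminf[of f "{k}"] by (simp add: summableI)

lemma sing_pointwise:
  assumes R: "0 < R" and b: "0 \<le> \<beta>"
  shows "indicator {x. hnorm x < R} x * ennreal ((R / hnorm x) powr \<beta>)
     \<le> (\<Sum>k. ennreal ((2 powr \<beta>) ^ (k+1)) * indicator {x. hnorm x < 2 * R / 2 ^ k} x)"
proof (cases "hnorm x < R \<and> hnorm x \<noteq> 0")
  case False
  then show ?thesis by (auto simp: indicator_def)
next
  case True
  hence r0: "0 < hnorm x" and rR: "hnorm x < R" using hnorm_nonneg[of x] by auto
  define y where "y = R / hnorm x"
  have y1: "1 < y" using r0 rR by (simp add: y_def)
  define k where "k = \<lfloor>log 2 y\<rfloor>"
  have k: "2 powr real_of_int k \<le> y \<and> y < 2 powr real_of_int (k + 1)"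
    using floor_log_eq_powr_iff[of y 2 k] y1 by (simp add: k_def)
  have k0: "0 \<le> k" using y1 unfolding k_def by simp
  define n where "n = nat k"
  have kn: "real_of_int k = real n" using k0 by (simp add: n_def)
  have n1: "2 ^ n \<le> y" using k kn by (simp add: powr_realpow)
  have e: "real_of_int (k+1) = real (n+1)" using kn by simp
  have "(2::real) powr real_of_int (k+1) = 2^(n+1)" by (subst e, rule powr_realpow) simp
  hence n2: "y < 2 ^ (n+1)" using k by simp
  have "hnorm x \<le> R / 2 ^ n" using n1 r0 by (simp add: y_def field_simps)
  also have "\<dots> < 2 * R / 2 ^ n" using R by (simp add: divide_strict_right_mono)
  finally have ind: "indicator {x. hnorm x < 2 * R / 2 ^ n} x = (1::ennreal)" by simp
  have "y powr \<beta> \<le> (2 ^ (n+1)) powr \<beta>" using n2 y1 b by (intro powr_mono2) auto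
  also have "(2::real) ^ (n+1) = 2 powr (real (n+1))" by (rule powr_realpow[symmetric]) simp
  also have "(2 powr (real (n+1))) powr \<beta> = (2 powr \<beta>) ^ (n+1)"
    by (subst powr_powr, subst powr_power) simp_all
  finally have le: "(R / hnorm x) powr \<beta> \<le> (2 powr \<beta>) ^ (n+1)" by (simp add: y_def)
  have "indicator {x. hnorm x < R} x * ennreal ((R / hnorm x) powr \<beta>) = ennreal ((R / hnorm x) powr \<beta>)"
    using rR by simp
  also have "\<dots> \<le> ennreal ((2 powr \<beta>) ^ (n+1)) * indicator {x. hnorm x < 2 * R / 2 ^ n} x"
    using le ind by (simp add: ennreal_leI)
  also have "\<dots> \<le> (\<Sum>k. ennreal ((2 powr \<beta>) ^ (k+1)) * indicator {x. hnorm x < 2 * R / 2 ^ k} x)"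
    by (rule ennreal_term_le_suminf[where f="\<lambda>k. ennreal ((2 powr \<beta>) ^ (k+1)) * indicator {x. hnorm x < 2 * R / 2 ^ k} x"])
  finally show ?thesis .
qed

definition Mc :: "real \<Rightarrow> real" where
  "Mc \<beta> = 128 * 2 powr \<beta> / (1 - 2 powr \<beta> / 16)"

lemma sing_int:
  assumes R: "0 < R" and b: "0 \<le> \<beta>" "\<beta> < 4"
  shows "(\<integral>\<^sup>+x. indicator {x. hnorm x < R} x * ennreal ((R / hnorm x) powr \<beta>) \<partial>lborel) \<le> ennreal (Mc \<beta> * R^4)"
proof -
  define q where "q = 2 powr \<beta> / 16"
  have q0: "0 < q" by (simp add: q_def)
  have "2 powr \<beta> < 2 powr (4::real)" by (rule powr_less_mono) (use b in auto)
  moreover have "(2::real) powr 4 = 16" by (simp add: powr_numeral)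
  ultimately have "2 powr \<beta> < 16" by simp
  hence q1: "q < 1" by (simp add: q_def)
  have termeq: "(2 powr \<beta>) ^ (k+1) * (8 * (2 * R / 2 ^ k)^4) = 128 * 2 powr \<beta> * R^4 * q^k" for k :: nat
  proof -
    have "(2::real) ^ (k * 4) = 16 ^ k" by (simp add: power_mult[symmetric] mult.commute[of k] power_mult)
    thus ?thesis by (simp add: q_def power_divide power_mult_distrib field_simps power_mult[symmetric] flip: power_mult)
  qed
  have "(\<integral>\<^sup>+x. indicator {x. hnorm x < R} x * ennreal ((R / hnorm x) powr \<beta>) \<partial>lborel)
      \<le> (\<integral>\<^sup>+x. (\<Sum>k. ennreal ((2 powr \<beta>) ^ (k+1)) * indicator {x. hnorm x < 2 * R / 2 ^ k} x) \<partial>lborel)"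
    by (intro nn_integral_mono sing_pointwise R b)
  also have "\<dots> = (\<Sum>k. \<integral>\<^sup>+x. ennreal ((2 powr \<beta>) ^ (k+1)) * indicator {x. hnorm x < 2 * R / 2 ^ k} x \<partial>lborel)"
    by (rule nn_integral_suminf) measurable
  also have "\<dots> = (\<Sum>k. ennreal ((2 powr \<beta>) ^ (k+1)) * emeasure lborel {x. hnorm x < 2 * R / 2 ^ k})"
    by (subst nn_integral_cmult_indicator) (simp_all, measurable)
  also have "\<dots> \<le> (\<Sum>k. ennreal ((2 powr \<beta>) ^ (k+1) * (8 * (2 * R / 2 ^ k)^4)))"
  proof (intro suminf_le)
    fix k :: nat
    have "emeasure lborel {x. hnorm x < 2 * R / 2 ^ k} \<le> ennreal (8 * (2 * R / 2 ^ k)^4)"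
      using R by (intro ball_upper) simp
    thus "ennreal ((2 powr \<beta>) ^ (k+1)) * emeasure lborel {x. hnorm x < 2 * R / 2 ^ k}
        \<le> ennreal ((2 powr \<beta>) ^ (k+1) * (8 * (2 * R / 2 ^ k)^4))"
      by (simp add: ennreal_mult mult_left_mono)
  qed (simp_all add: summableI)
  also have "\<dots> = (\<Sum>k. ennreal (128 * 2 powr \<beta> * R^4 * q^k))" by (simp only: termeq)
  also have "\<dots> = ennreal (\<Sum>k. 128 * 2 powr \<beta> * R^4 * q^k)"
    using q0 q1 R by (intro suminf_ennreal2) (auto intro!: summable_mult summable_geometric)
  also have "(\<Sum>k. 128 * 2 powr \<beta> * R^4 * q^k) = 128 * 2 powr \<beta> * R^4 * (1 / (1 - q))"
    using q0 q1 by (subst suminf_mult) (auto simp: suminf_geometric)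
  also have "\<dots> = Mc \<beta> * R^4" by (simp add: Mc_def q_def)
  finally show ?thesis .
qed

lemma Mc_pos: "0 \<le> \<beta> \<Longrightarrow> \<beta> < 4 \<Longrightarrow> 0 < Mc \<beta>"
proof -
  assume b: "0 \<le> \<beta>" "\<beta> < 4"
  have "2 powr \<beta> < 2 powr (4::real)" by (rule powr_less_mono) (use b in auto)
  moreover have "(2::real) powr 4 = 16" by (simp add: powr_numeral)
  ultimately have "2 powr \<beta> < 16" by simp
  thus ?thesis by (simp add: Mc_def)
qed



lemma sets_hvol[simp, measurable_cong]: "sets hvol = sets borel"
  by (simp add: hvol_def)

lemma space_hvol[simp]: "space hvol = UNIV"
  by (simp add: hvol_def)

lemma measurable_hvol1[simp]: "measurable hvol M = measurable borel M"
  by (rule measurable_cong_sets) simp_all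

lemma nn_hvol: assumes "f \<in> borel_measurable borel"
  shows "(\<integral>\<^sup>+x. f x \<partial>hvol) = 4 * (\<integral>\<^sup>+x. f x \<partial>lborel)"
  unfolding hvol_def using assms
  by (subst nn_integral_density) (simp_all add: nn_integral_cmult)

lemma hinv_meas[measurable]: "hinv \<in> borel_measurable borel"
proof -
  have "continuous_on UNIV hinv" unfolding hinv_def by (simp add: case_prod_beta', intro continuous_intros)
  thus ?thesis by (rule borel_measurable_continuous_onI)
qed

lemma hd_cont: "continuous_on UNIV (\<lambda>z. hdist (fst z) (snd z))"
proof -
  have e: "(\<lambda>z. hdist (fst z) (snd z)) = (\<lambda>z. hnorm (- fst (fst z) + fst (snd z),
     - fst (snd (fst z)) + fst (snd (snd z)),
     - snd (snd (fst z)) + snd (snd (snd z)) + 2 * (- fst (snd (fst z)) * fst (snd z) - (- fst (fst z)) * fst (snd (snd z)))))"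
    by (auto simp: fun_eq_iff hdist_def hmult_def hinv_def split: prod.splits)
  show ?thesis unfolding e
    by (rule continuous_on_compose2[OF hnorm_cont]) (intro continuous_intros, auto)
qed

lemma hd_meas[measurable]: "(\<lambda>p. hdist (f p) (g p)) \<in> borel_measurable M"
  if [measurable]: "f \<in> measurable M borel" "g \<in> measurable M borel"
proof -
  have m: "(\<lambda>z. hdist (fst z) (snd z)) \<in> borel_measurable (borel \<Otimes>\<^sub>M borel)"
    unfolding borel_prod using borel_measurable_continuous_onI[OF hd_cont] by simp
  have "(\<lambda>p. (f p, g p)) \<in> measurable M (borel \<Otimes>\<^sub>M borel)" by measurable
  from measurable_compose[OF this m] show ?thesis by simp
qed

lemma transl_hvol: fixes h :: "heis \<Rightarrow> ennreal"
  assumes [measurable]: "h \<in> borel_measurable borel"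
  shows "(\<integral>\<^sup>+x. h (hmult a x) \<partial>hvol) = (\<integral>\<^sup>+x. h x \<partial>hvol)"
  by (simp add: nn_hvol transl_lborel)

lemma hmult_hinv_cancel: "hmult (hinv y) (hmult y w) = w"
  by (cases y, cases w) (simp add: hmult_def hinv_def algebra_simps)

lemma hmult_zero: "hmult (hinv 0) q = q"
  by (cases q) (simp add: hmult_def hinv_def zero_prod_def)

lemma hd_transl: fixes h :: "real \<Rightarrow> ennreal"
  assumes [measurable]: "h \<in> borel_measurable borel"
  shows "(\<integral>\<^sup>+x. h (hdist y x) \<partial>hvol) = (\<integral>\<^sup>+x. h (hnorm x) \<partial>hvol)"
proof -
  have "(\<integral>\<^sup>+x. h (hnorm x) \<partial>hvol) = (\<integral>\<^sup>+x. h (hnorm (hmult (hinv y) (hmult y x))) \<partial>hvol)"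
    by (simp add: hmult_hinv_cancel)
  also have "\<dots> = (\<integral>\<^sup>+x. h (hnorm (hmult (hinv y) x)) \<partial>hvol)"
    by (rule transl_hvol[where h="\<lambda>x. h (hnorm (hmult (hinv y) x))"]) measurable
  finally show ?thesis by (simp add: hdist_def)
qed

lemma hball_hd: "hball p r = {q. hdist p q < r}"
  by (simp add: hball_def hdist_def)

lemma hball_meas[measurable]: "hball p r \<in> sets borel"
  unfolding hball_hd by measurable

lemma emeasure_hball: "emeasure hvol (hball p r) = 4 * emeasure lborel {x. hnorm x < r}"
proof -
  have "emeasure hvol (hball p r) = (\<integral>\<^sup>+x. indicator (hball p r) x \<partial>hvol)"
    by (simp add: nn_integral_indicator)
  also have "\<dots> = (\<integral>\<^sup>+x. indicator {..<r} (hdist p x) \<partial>hvol)"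
    by (intro nn_integral_cong) (simp add: hball_hd indicator_def)
  also have "\<dots> = (\<integral>\<^sup>+x. indicator {..<r} (hnorm x) \<partial>hvol)"
    by (rule hd_transl) simp
  also have "\<dots> = (\<integral>\<^sup>+x. indicator {x. hnorm x < r} x \<partial>hvol)"
    by (intro nn_integral_cong) (simp add: indicator_def)
  also have "\<dots> = emeasure hvol {x. hnorm x < r}"
    by (rule nn_integral_indicator) measurable
  also have "\<dots> = 4 * emeasure lborel {x. hnorm x < r}"
  proof -
    have m: "{x. hnorm x < r} \<in> sets lborel" by measurable
    show ?thesis unfolding hvol_def using emeasure_density_const[OF m, of 4] by simp
  qed
  finally show ?thesis .
qed

lemma hball_upper: "0 < r \<Longrightarrow> emeasure hvol (hball p r) \<le> ennreal (32 * r^4)"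
proof -
  assume r: "0 < r"
  have "emeasure hvol (hball p r) = 4 * emeasure lborel {x. hnorm x < r}" by (rule emeasure_hball)
  also have "\<dots> \<le> 4 * ennreal (8 * r^4)" by (intro mult_left_mono ball_upper r) simp
  also have "\<dots> = ennreal (32 * r^4)" by (simp add: ennreal_mult mult.assoc[symmetric])
  finally show ?thesis .
qed

lemma hball_lower: "0 < r \<Longrightarrow> ennreal (4 * r^4) \<le> emeasure hvol (hball p r)"
  using ball_lower[of r] by (simp add: emeasure_hball ennreal_mult mult_left_mono)

lemma sing_hd:
  assumes R: "0 < R" and b: "0 \<le> \<beta>" "\<beta> < 4"
  shows "(\<integral>\<^sup>+x. indicator {x. hdist y x < R} x * ennreal ((R / hdist y x) powr \<beta>) \<partial>hvol) \<le> ennreal (4 * Mc \<beta> * R^4)"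
proof -
  have "(\<integral>\<^sup>+x. indicator {x. hdist y x < R} x * ennreal ((R / hdist y x) powr \<beta>) \<partial>hvol)
      = (\<integral>\<^sup>+x. (\<lambda>s. indicator {..<R} s * ennreal ((R / s) powr \<beta>)) (hdist y x) \<partial>hvol)"
    by (intro nn_integral_cong) (simp add: indicator_def)
  also have "\<dots> = (\<integral>\<^sup>+x. (\<lambda>s. indicator {..<R} s * ennreal ((R / s) powr \<beta>)) (hnorm x) \<partial>hvol)"
    by (rule hd_transl) measurable
  also have "\<dots> = 4 * (\<integral>\<^sup>+x. indicator {x. hnorm x < R} x * ennreal ((R / hnorm x) powr \<beta>) \<partial>lborel)"
    by (subst nn_hvol) (measurable, simp add: indicator_def)
  also have "\<dots> \<le> 4 * ennreal (Mc \<beta> * R^4)"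
    by (intro mult_left_mono sing_int R b) simp
  also have "\<dots> = ennreal (4 * Mc \<beta> * R^4)" by (simp add: ennreal_mult' mult.assoc)
  finally show ?thesis .
qed



lemma exp_jensen:
  fixes w g :: "'a \<Rightarrow> real"
  assumes [measurable]: "w \<in> borel_measurable M" "g \<in> borel_measurable M"
    and w0: "\<And>y. 0 \<le> w y" and wi: "integrable M w" and w1: "integral\<^sup>L M w = 1"
    and wg: "integrable M (\<lambda>y. w y * g y)"
  shows "ennreal (exp (\<integral>y. w y * g y \<partial>M)) \<le> (\<integral>\<^sup>+y. ennreal (w y * exp (g y)) \<partial>M)"
proof (cases "(\<integral>\<^sup>+y. ennreal (w y * exp (g y)) \<partial>M) = \<infinity>")
  case True then show ?thesis by simp
next
  case False
  define E where "E = (\<integral>y. w y * g y \<partial>M)"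
  have ie: "integrable M (\<lambda>y. w y * exp (g y))"
    using False w0 by (intro integrableI_nonneg) (auto simp: less_top)
  have pt: "w y * (exp E * (1 + g y - E)) \<le> w y * exp (g y)" for y
  proof -
    have "exp E * (1 + (g y - E)) \<le> exp E * exp (g y - E)"
      by (intro mult_left_mono exp_ge_add_one_self) simp
    also have "\<dots> = exp (g y)" by (simp add: exp_diff)
    finally show ?thesis using w0[of y] by (intro mult_left_mono) (simp_all add: add_diff_eq)
  qed
  define F where "F y = exp E * (w y + w y * g y - E * w y)" for y
  have Fe: "F y = w y * (exp E * (1 + g y - E))" for y by (simp add: F_def algebra_simps)
  have Fi: "integrable M F" unfolding F_def using wi wg by (intro integrable_mult_right integrable_diff integrable_add) auto
  have "integral\<^sup>L M F = exp E * ((\<integral>y. w y \<partial>M) + (\<integral>y. w y * g y \<partial>M) - E * (\<integral>y. w y \<partial>M))"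
    unfolding F_def using wi wg by simp
  also have "\<dots> = exp E" by (simp add: w1 E_def)
  finally have "exp E = integral\<^sup>L M F" by simp
  also have "\<dots> \<le> (\<integral>y. w y * exp (g y) \<partial>M)"
    by (rule integral_mono[OF Fi ie]) (simp add: Fe pt)
  finally have "exp E \<le> (\<integral>y. w y * exp (g y) \<partial>M)" .
  hence "ennreal (exp E) \<le> ennreal (\<integral>y. w y * exp (g y) \<partial>M)" by (rule ennreal_leI)
  also have "\<dots> = (\<integral>\<^sup>+y. ennreal (w y * exp (g y)) \<partial>M)"
    using ie w0 by (intro nn_integral_eq_integral[symmetric]) auto
  finally show ?thesis by (simp add: E_def)
qed

lemma tonelli_hvol:
  fixes H :: "heis \<Rightarrow> heis \<Rightarrow> ennreal"
  assumes [measurable]: "(\<lambda>(x,y). H x y) \<in> borel_measurable (borel \<Otimes>\<^sub>M borel)"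
  shows "(\<integral>\<^sup>+x. \<integral>\<^sup>+y. H x y \<partial>hvol \<partial>hvol) = (\<integral>\<^sup>+y. \<integral>\<^sup>+x. H x y \<partial>hvol \<partial>hvol)"
proof -
  have eqm: "measurable (lborel \<Otimes>\<^sub>M lborel) (borel::ennreal measure) = measurable ((borel::heis measure) \<Otimes>\<^sub>M (borel::heis measure)) borel"
    by (intro measurable_cong_sets sets_pair_measure_cong) simp_all
  have m1: "(\<lambda>(x,y). H x y) \<in> borel_measurable (lborel \<Otimes>\<^sub>M lborel)"
    unfolding eqm by (rule assms)
  have m2: "(\<lambda>(y,x). H x y) \<in> borel_measurable (lborel \<Otimes>\<^sub>M lborel)"
    unfolding eqm by measurable
  have mi1: "(\<lambda>x. \<integral>\<^sup>+ y. H x y \<partial>lborel) \<in> borel_measurable lborel"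
    using lborel.borel_measurable_nn_integral_fst[OF m1] by simp
  have mi2: "(\<lambda>y. \<integral>\<^sup>+ x. H x y \<partial>lborel) \<in> borel_measurable lborel"
    using lborel.borel_measurable_nn_integral_fst[OF m2] by simp
  have "(\<integral>\<^sup>+x. \<integral>\<^sup>+y. H x y \<partial>hvol \<partial>hvol) = (\<integral>\<^sup>+x. 4 * \<integral>\<^sup>+y. H x y \<partial>lborel \<partial>hvol)"
    by (intro nn_integral_cong nn_hvol) measurable
  also have "\<dots> = 4 * (\<integral>\<^sup>+x. 4 * \<integral>\<^sup>+y. H x y \<partial>lborel \<partial>lborel)"
    using m1 by (intro nn_hvol) measurable
  also have "\<dots> = 16 * (\<integral>\<^sup>+x. \<integral>\<^sup>+y. H x y \<partial>lborel \<partial>lborel)"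
    using mi1 by (subst nn_integral_cmult) (simp_all add: mult.assoc[symmetric])
  also have "\<dots> = 16 * (\<integral>\<^sup>+y. \<integral>\<^sup>+x. H x y \<partial>lborel \<partial>lborel)"
    using lborel_pair.Fubini'[OF m1] by simp
  also have "\<dots> = 4 * (\<integral>\<^sup>+y. 4 * \<integral>\<^sup>+x. H x y \<partial>lborel \<partial>lborel)"
    using mi2 by (subst nn_integral_cmult) (simp_all add: mult.assoc[symmetric])
  also have "\<dots> = (\<integral>\<^sup>+y. 4 * \<integral>\<^sup>+x. H x y \<partial>lborel \<partial>hvol)"
    using m2 by (intro nn_hvol[symmetric]) measurable
  also have "\<dots> = (\<integral>\<^sup>+y. \<integral>\<^sup>+x. H x y \<partial>hvol \<partial>hvol)"
    by (intro nn_integral_cong nn_hvol[symmetric]) measurable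
  finally show ?thesis .
qed



lemma hd_pos: "a \<noteq> b \<Longrightarrow> 0 < hdist a b"
  using hd_nonneg[of a b] hd_zero_iff[of a b] by linarith

lemma geo_bound:
  assumes r: "0 < r" and x: "hdist p x < r" and x': "hdist p x' < r" and yx: "y \<noteq> x" and yx': "y \<noteq> x'"
    and b: "0 \<le> \<beta>" "\<beta> \<le> 4"
  shows "(hdist y x' / hdist y x) powr \<beta> \<le> 81 + indicator {y. hdist p y < 2*r} y * (3*r / hdist y x) powr \<beta>"
proof -
  have dx: "0 < hdist y x" using yx by (rule hd_pos)
  have dx': "0 < hdist y x'" using yx' by (rule hd_pos)
  have t1: "hdist y x' \<le> hdist y p + hdist p x'" by (rule hd_tri)
  have t2: "hdist y p \<le> hdist y x + hdist x p" by (rule hd_tri)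
  have s1: "hdist x p = hdist p x" "hdist y p = hdist p y" by (simp_all add: hd_sym)
  show ?thesis
  proof (cases "hdist p y < 2*r")
    case True
    have "hdist y x' / hdist y x \<le> 3*r / hdist y x"
      using t1 s1 True x' dx by (intro divide_right_mono) auto
    hence "(hdist y x' / hdist y x) powr \<beta> \<le> (3*r / hdist y x) powr \<beta>"
      using dx dx' b by (intro powr_mono2) auto
    moreover have "0 \<le> (81::real)" by simp
    ultimately show ?thesis using True by simp
  next
    case False
    have "hdist y x' < 3 * hdist y x" using t1 t2 s1 False x x' by linarith
    hence q3: "hdist y x' / hdist y x \<le> 3" using dx by (simp add: divide_le_eq)
    have "(hdist y x' / hdist y x) powr \<beta> \<le> 3 powr \<beta>"
      using q3 dx dx' b by (intro powr_mono2) auto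
    also have "\<dots> \<le> 3 powr (4::real)" using b by (intro powr_mono) auto
    also have "(3::real) powr (4::real) = 81" by (simp add: powr_numeral)
    finally show ?thesis using False by simp
  qed
qed

lemma K_diff:
  assumes "y \<noteq> 0" "y \<noteq> x" "y \<noteq> x'"
  shows "ln (hnorm y / hdist y x) - ln (hnorm y / hdist y x') = ln (hdist y x' / hdist y x)"
proof -
  have a: "0 < hnorm y" using assms by (simp add: hnorm_pos)
  have "0 < hdist y x" "0 < hdist y x'" using assms by (simp_all add: hd_pos)
  thus ?thesis using a by (simp add: ln_divide_pos)
qed

lemma exp_ln_powr: "0 < (q::real) \<Longrightarrow> exp (\<beta> * ln q) = q powr \<beta>"
  by (auto simp: powr_def mult.commute)

lemma K_zero:
  assumes y0: "y \<noteq> 0" and s0: "s \<noteq> 0"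
    and K: "ln (hnorm y / hnorm (hmult (hinv y) (0,0,s))) = 0"
  shows "y = (0,0,s) \<or> snd (snd y) * 2 = s"
proof -
  obtain y1 y2 t where y: "y = (y1,y2,t)" by (cases y) auto
  have hm0: "hmult (hinv (y1,y2,t)) (0,0,s) = (-y1, -y2, s - t)" by (simp add: hmult_def hinv_def)
  hence hm: "hmult (hinv y) (0,0,s) = (-y1, -y2, s - t)" by (simp add: y)
  have a: "0 < hnorm y" using y0 by (simp add: hnorm_pos)
  show ?thesis
  proof (cases "hnorm (hmult (hinv y) (0,0,s)) = 0")
    case True
    hence "hmult (hinv y) (0,0,s) = 0" by (simp add: hnorm_zero_iff)
    hence "(-y1, -y2, s - t) = (0::heis)" by (simp only: hm)
    thus ?thesis by (simp add: y zero_prod_def)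
  next
    case False
    hence d: "0 < hnorm (hmult (hinv y) (0,0,s))" using hnorm_nonneg by (simp add: less_le)
    hence "hnorm y / hnorm (hmult (hinv y) (0,0,s)) = 1" using K a by simp
    hence "hnorm y = hnorm (hmult (hinv y) (0,0,s))" using d by simp
    hence "hnorm y ^ 4 = hnorm (hmult (hinv y) (0,0,s)) ^ 4" by simp
    hence "NN y = NN (hmult (hinv y) (0,0,s))" by (simp add: hnorm_pow4)
    hence "t\<^sup>2 = (s - t)\<^sup>2" by (simp add: NN_def hm hm0 y)
    hence "s * (s - 2 * t) = 0" by (auto simp: power2_eq_square algebra_simps)
    hence "t * 2 = s" using s0 by simp
    thus ?thesis by (simp add: y)
  qed
qed

lemma f_meas_trick:
  fixes f :: "heis \<Rightarrow> real"
  assumes m1: "(\<lambda>y. ln (hnorm y / hnorm (hmult (hinv y) (0,0,1))) * f y) \<in> borel_measurable borel"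
    and m2: "(\<lambda>y. ln (hnorm y / hnorm (hmult (hinv y) (0,0,-1))) * f y) \<in> borel_measurable borel"
  shows "f \<in> borel_measurable borel"
proof -
  define K1 where "K1 y = ln (hnorm y / hnorm (hmult (hinv y) (0,0,1)))" for y
  define K2 where "K2 y = ln (hnorm y / hnorm (hmult (hinv y) (0,0,-1)))" for y
  have e1: "K1 = (\<lambda>y. ln (hnorm y / hdist y (0,0,1)))" "K2 = (\<lambda>y. ln (hnorm y / hdist y (0,0,-1)))"
    by (simp_all add: K1_def K2_def hdist_def fun_eq_iff)
  have [measurable]: "K1 \<in> borel_measurable borel" "K2 \<in> borel_measurable borel"
    unfolding e1 by measurable
  have [measurable]: "(\<lambda>y. K1 y * f y) \<in> borel_measurable borel" "(\<lambda>y. K2 y * f y) \<in> borel_measurable borel"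
    using m1 m2 by (simp_all add: K1_def K2_def)
  have key: "y \<noteq> 0 \<Longrightarrow> K1 y \<noteq> 0 \<or> K2 y \<noteq> 0" for y
  proof (rule ccontr)
    assume y0: "y \<noteq> 0" and "\<not> (K1 y \<noteq> 0 \<or> K2 y \<noteq> 0)"
    hence "K1 y = 0" "K2 y = 0" by auto
    from K_zero[OF y0 _ this(1)[unfolded K1_def]] K_zero[OF y0 _ this(2)[unfolded K2_def]]
    show False by auto
  qed
  have "f = (\<lambda>y. if y = 0 then f 0 else if K1 y \<noteq> 0 then (K1 y * f y) / K1 y else (K2 y * f y) / K2 y)"
    using key by (auto simp: fun_eq_iff)
  also have "\<dots> \<in> borel_measurable borel" by measurable
  finally show ?thesis .
qed



lemma AE_hvol_not3: "AE y in hvol. y \<noteq> a \<and> y \<noteq> b \<and> y \<noteq> c"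
proof -
  have "AE y in lborel. y \<notin> {a,b,c}"
    by (rule AE_not_in) (rule finite_imp_null_set_lborel, simp)
  hence "AE y in lborel. 0 < (4::ennreal) \<longrightarrow> y \<noteq> a \<and> y \<noteq> b \<and> y \<noteq> c" by auto
  thus ?thesis unfolding hvol_def by (subst AE_density) simp_all
qed

lemma claim:
  fixes u f :: "heis \<Rightarrow> real"
  assumes f0: "\<And>y. 0 \<le> f y" and fm[measurable]: "f \<in> borel_measurable borel"
    and fint: "integrable hvol f"
    and nC: "\<And>x. integrable hvol (\<lambda>y. ln (hnorm y / hdist y x) * f y)"
    and uC: "\<And>x. u x = (1/c1') * (\<integral>y. ln (hnorm y / hdist y x) * f y \<partial>hvol) + C"
    and c: "0 < c1'" and al: "\<alpha> = integral\<^sup>L hvol f" and be: "\<beta> = 4 * \<alpha> / c1'" and b4: "\<beta> \<le> 4"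
    and r: "0 < r" and x: "hdist p x < r" and x': "hdist p x' < r"
  shows "ennreal (exp (4 * u x)) \<le> ennreal (exp (4 * u x')) *
      (81 + (\<integral>\<^sup>+y. ennreal (f y / \<alpha> * indicator {y. hdist p y < 2*r} y * (3*r / hdist y x) powr \<beta>) \<partial>hvol))"
proof -
  let ?G = "(\<integral>\<^sup>+y. ennreal (f y / \<alpha> * indicator {y. hdist p y < 2*r} y * (3*r / hdist y x) powr \<beta>) \<partial>hvol)"
  have a0: "0 \<le> \<alpha>" unfolding al using f0 by simp
  have b0: "0 \<le> \<beta>" unfolding be using a0 c by simp
  show ?thesis
  proof (cases "\<alpha> = 0")
    case True
    have "AE y in hvol. f y = 0"
      using integral_nonneg_eq_0_iff_AE[OF fint] f0 True al by simp
    hence z: "(\<integral>y. ln (hnorm y / hdist y z) * f y \<partial>hvol) = 0" for z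
      by (intro integral_eq_zero_AE) auto
    have "u x = u x'" using uC[of x] uC[of x'] z by simp
    hence "ennreal (exp (4 * u x)) = ennreal (exp (4 * u x')) * 1" by simp
    also have "\<dots> \<le> ennreal (exp (4 * u x')) * (81 + ?G)"
      by (intro mult_left_mono) (simp_all add: add_increasing2)
    finally show ?thesis .
  next
    case False
    hence ap: "0 < \<alpha>" using a0 by simp
    define w where "w y = f y / \<alpha>" for y
    define D where "D y = ln (hnorm y / hdist y x) - ln (hnorm y / hdist y x')" for y
    have w0: "0 \<le> w y" for y using f0 a0 by (simp add: w_def)
    have [measurable]: "w \<in> borel_measurable borel" unfolding w_def by measurable
    have [measurable]: "D \<in> borel_measurable borel" unfolding D_def by measurable
    have wi: "integrable hvol w" unfolding w_def using fint by simp
    have w1: "integral\<^sup>L hvol w = 1" unfolding w_def using ap al by simp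
    have wD: "(\<lambda>y. w y * (\<beta> * D y)) = (\<lambda>y. (4 / c1') * (ln (hnorm y / hdist y x) * f y - ln (hnorm y / hdist y x') * f y))"
      using ap c by (auto simp: fun_eq_iff w_def D_def be field_simps)
    have wDi: "integrable hvol (\<lambda>y. w y * (\<beta> * D y))"
      unfolding wD using nC by simp
    have diff: "4 * u x - 4 * u x' = (\<integral>y. w y * (\<beta> * D y) \<partial>hvol)"
    proof -
      have i: "(\<integral>y. (4 / c1') * (ln (hnorm y / hdist y x) * f y - ln (hnorm y / hdist y x') * f y) \<partial>hvol)
         = (4/c1') * ((\<integral>y. ln (hnorm y / hdist y x) * f y \<partial>hvol) - (\<integral>y. ln (hnorm y / hdist y x') * f y \<partial>hvol))"
        by (simp only: integral_mult_right_zero Bochner_Integration.integral_diff[OF nC[of x] nC[of x']])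
      show ?thesis unfolding wD i by (simp add: uC[of x] uC[of x'] right_diff_distrib)
    qed
    have J: "ennreal (exp (\<integral>y. w y * (\<beta> * D y) \<partial>hvol)) \<le> (\<integral>\<^sup>+y. ennreal (w y * exp (\<beta> * D y)) \<partial>hvol)"
      by (rule exp_jensen[OF _ _ w0 wi w1 wDi]) measurable
    have AEb: "AE y in hvol. ennreal (w y * exp (\<beta> * D y)) \<le>
        ennreal (81 * w y) + ennreal (f y / \<alpha> * indicator {y. hdist p y < 2*r} y * (3*r / hdist y x) powr \<beta>)"
      using AE_hvol_not3[of 0 x x']
    proof eventually_elim
      case (elim y)
      hence "D y = ln (hdist y x' / hdist y x)" unfolding D_def by (intro K_diff) auto
      moreover have "0 < hdist y x' / hdist y x" using elim by (simp add: hd_pos)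
      ultimately have "exp (\<beta> * D y) = (hdist y x' / hdist y x) powr \<beta>" by (simp add: exp_ln_powr)
      also have "\<dots> \<le> 81 + indicator {y. hdist p y < 2*r} y * (3*r / hdist y x) powr \<beta>"
        using elim by (intro geo_bound r x x' b0 b4) auto
      finally have "w y * exp (\<beta> * D y) \<le> w y * (81 + indicator {y. hdist p y < 2*r} y * (3*r / hdist y x) powr \<beta>)"
        by (intro mult_left_mono w0)
      also have "\<dots> = 81 * w y + f y / \<alpha> * indicator {y. hdist p y < 2*r} y * (3*r / hdist y x) powr \<beta>"
        by (simp add: w_def algebra_simps)
      finally show ?case
        using w0[of y] f0[of y] a0 by (simp add: ennreal_plus[symmetric] del: ennreal_plus)
    qed
    have "(\<integral>\<^sup>+y. ennreal (w y * exp (\<beta> * D y)) \<partial>hvol) \<le>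
        (\<integral>\<^sup>+y. ennreal (81 * w y) + ennreal (f y / \<alpha> * indicator {y. hdist p y < 2*r} y * (3*r / hdist y x) powr \<beta>) \<partial>hvol)"
      by (rule nn_integral_mono_AE[OF AEb])
    also have "\<dots> = (\<integral>\<^sup>+y. ennreal (81 * w y) \<partial>hvol) + ?G"
      by (rule nn_integral_add) measurable
    also have "(\<integral>\<^sup>+y. ennreal (81 * w y) \<partial>hvol) = 81"
    proof -
      have "(\<integral>\<^sup>+y. ennreal (81 * w y) \<partial>hvol) = ennreal (\<integral>y. 81 * w y \<partial>hvol)"
        using wi w0 by (intro nn_integral_eq_integral) auto
      also have "\<dots> = 81" using w1 by simp
      finally show ?thesis .
    qed
    finally have le: "ennreal (exp (4 * u x - 4 * u x')) \<le> 81 + ?G" using J diff by simp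
    have "ennreal (exp (4 * u x)) = ennreal (exp (4 * u x')) * ennreal (exp (4 * u x - 4 * u x'))"
      by (simp add: ennreal_mult[symmetric] exp_diff)
    also have "\<dots> \<le> ennreal (exp (4 * u x')) * (81 + ?G)"
      by (intro mult_left_mono le) simp
    finally show ?thesis .
  qed
qed



lemma meas_nn_hvol:
  fixes H :: "heis \<Rightarrow> heis \<Rightarrow> ennreal"
  assumes [measurable]: "(\<lambda>(x,y). H x y) \<in> borel_measurable (borel \<Otimes>\<^sub>M borel)"
  shows "(\<lambda>x. \<integral>\<^sup>+y. H x y \<partial>hvol) \<in> borel_measurable borel"
proof -
  have eqm: "measurable (lborel \<Otimes>\<^sub>M lborel) (borel::ennreal measure) = measurable ((borel::heis measure) \<Otimes>\<^sub>M (borel::heis measure)) borel"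
    by (intro measurable_cong_sets sets_pair_measure_cong) simp_all
  have m1: "(\<lambda>(x,y). H x y) \<in> borel_measurable (lborel \<Otimes>\<^sub>M lborel)"
    unfolding eqm by (rule assms)
  have mi1: "(\<lambda>x. \<integral>\<^sup>+ y. H x y \<partial>lborel) \<in> borel_measurable lborel"
    using lborel.borel_measurable_nn_integral_fst[OF m1] by simp
  have "(\<lambda>x. \<integral>\<^sup>+y. H x y \<partial>hvol) = (\<lambda>x. 4 * \<integral>\<^sup>+y. H x y \<partial>lborel)"
    by (intro ext nn_hvol) measurable
  also have "\<dots> \<in> borel_measurable borel" using mi1 by simp
  finally show ?thesis .
qed

lemma integrate:
  fixes u f :: "heis \<Rightarrow> real"
  assumes f0: "\<And>y. 0 \<le> f y" and fm[measurable]: "f \<in> borel_measurable borel"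
    and fint: "integrable hvol f"
    and nC: "\<And>x. integrable hvol (\<lambda>y. ln (hnorm y / hdist y x) * f y)"
    and uC: "\<And>x. u x = (1/c1') * (\<integral>y. ln (hnorm y / hdist y x) * f y \<partial>hvol) + C"
    and um[measurable]: "u \<in> borel_measurable borel"
    and c: "0 < c1'" and al: "\<alpha> = integral\<^sup>L hvol f" and be: "\<beta> = 4 * \<alpha> / c1'" and b4: "\<beta> < 4"
    and r: "0 < r" and x': "hdist p x' < r"
  shows "(\<integral>\<^sup>+x. indicator (hball p r) x * ennreal (exp (4 * u x)) \<partial>hvol)
     \<le> ennreal (exp (4 * u x')) * (emeasure hvol (hball p r) * ennreal (81 + 81 * Mc \<beta>))"
proof -
  define B where "B = hball p r"
  define N where "N = {y. hdist p y < 2*r}"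
  define E where "E = ennreal (exp (4 * u x'))"
  define H where "H x y = ennreal (f y / \<alpha> * indicator N y * (3*r / hdist y x) powr \<beta>)" for x y
  have a0: "0 \<le> \<alpha>" unfolding al using f0 by simp
  have b0: "0 \<le> \<beta>" unfolding be using a0 c by simp
  have Mc0: "0 < Mc \<beta>" using b0 b4 by (rule Mc_pos)
  have [measurable]: "B \<in> sets borel" "N \<in> sets borel" unfolding B_def N_def by measurable
  have Hm[measurable]: "(\<lambda>(x,y). H x y) \<in> borel_measurable (borel \<Otimes>\<^sub>M borel)"
    unfolding H_def by measurable
  have Hm2[measurable]: "(\<lambda>(x,y). indicator B x * H x y) \<in> borel_measurable (borel \<Otimes>\<^sub>M borel)"
    by measurable
  have Gm[measurable]: "(\<lambda>x. \<integral>\<^sup>+y. indicator B x * H x y \<partial>hvol) \<in> borel_measurable borel"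
    by (rule meas_nn_hvol) measurable
  have step1: "(\<integral>\<^sup>+x. indicator B x * ennreal (exp (4 * u x)) \<partial>hvol)
      \<le> (\<integral>\<^sup>+x. E * (81 * indicator B x) + E * (\<integral>\<^sup>+y. indicator B x * H x y \<partial>hvol) \<partial>hvol)"
  proof (intro nn_integral_mono)
    fix x
    show "indicator B x * ennreal (exp (4 * u x)) \<le> E * (81 * indicator B x) + E * (\<integral>\<^sup>+y. indicator B x * H x y \<partial>hvol)"
    proof (cases "x \<in> B")
      case True
      hence xB: "hdist p x < r" by (simp add: B_def hball_hd)
      have "ennreal (exp (4 * u x)) \<le> E * (81 + (\<integral>\<^sup>+y. H x y \<partial>hvol))"
        unfolding E_def H_def N_def
        by (rule claim[OF f0 fm fint nC uC c al be _ r xB x']) (use b4 in simp)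
      thus ?thesis using True by (simp add: distrib_left)
    qed simp
  qed
  also have "\<dots> = (\<integral>\<^sup>+x. E * (81 * indicator B x) \<partial>hvol) + (\<integral>\<^sup>+x. E * (\<integral>\<^sup>+y. indicator B x * H x y \<partial>hvol) \<partial>hvol)"
    by (rule nn_integral_add) measurable
  also have "(\<integral>\<^sup>+x. E * (81 * indicator B x) \<partial>hvol) = E * (81 * emeasure hvol B)"
    by (simp add: nn_integral_cmult nn_integral_cmult_indicator)
  also have "(\<integral>\<^sup>+x. E * (\<integral>\<^sup>+y. indicator B x * H x y \<partial>hvol) \<partial>hvol)
       = E * (\<integral>\<^sup>+x. \<integral>\<^sup>+y. indicator B x * H x y \<partial>hvol \<partial>hvol)"
    by (rule nn_integral_cmult) measurable
  also have "(\<integral>\<^sup>+x. \<integral>\<^sup>+y. indicator B x * H x y \<partial>hvol \<partial>hvol) = (\<integral>\<^sup>+y. \<integral>\<^sup>+x. indicator B x * H x y \<partial>hvol \<partial>hvol)"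
    by (rule tonelli_hvol[where H="\<lambda>x y. indicator B x * H x y"]) measurable
  also have "\<dots> \<le> (\<integral>\<^sup>+y. ennreal (f y / \<alpha>) * ennreal (324 * Mc \<beta> * r^4) \<partial>hvol)"
  proof (intro nn_integral_mono)
    fix y
    show "(\<integral>\<^sup>+x. indicator B x * H x y \<partial>hvol) \<le> ennreal (f y / \<alpha>) * ennreal (324 * Mc \<beta> * r^4)"
    proof (cases "y \<in> N")
      case False
      thus ?thesis by (simp add: H_def)
    next
      case True
      have "(\<integral>\<^sup>+x. indicator B x * H x y \<partial>hvol) \<le>
          (\<integral>\<^sup>+x. ennreal (f y / \<alpha>) * (indicator {x. hdist y x < 3*r} x * ennreal ((3*r / hdist y x) powr \<beta>)) \<partial>hvol)"
      proof (intro nn_integral_mono)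
        fix x
        show "indicator B x * H x y \<le> ennreal (f y / \<alpha>) * (indicator {x. hdist y x < 3*r} x * ennreal ((3*r / hdist y x) powr \<beta>))"
        proof (cases "x \<in> B")
          case xB: True
          have "hdist y x \<le> hdist y p + hdist p x" by (rule hd_tri)
          moreover have "hdist y p = hdist p y" by (rule hd_sym)
          ultimately have "hdist y x < 3*r" using xB True by (simp add: B_def N_def hball_hd)
          moreover have "0 \<le> f y / \<alpha>" using f0[of y] a0 by simp
          ultimately show ?thesis using xB True
            by (simp add: H_def ennreal_mult'[symmetric])
        qed simp
      qed
      also have "\<dots> = ennreal (f y / \<alpha>) * (\<integral>\<^sup>+x. indicator {x. hdist y x < 3*r} x * ennreal ((3*r / hdist y x) powr \<beta>) \<partial>hvol)"
        by (rule nn_integral_cmult) measurable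
      also have "\<dots> \<le> ennreal (f y / \<alpha>) * ennreal (4 * Mc \<beta> * (3*r)^4)"
        using r b0 b4 by (intro mult_left_mono sing_hd) simp_all
      also have "4 * Mc \<beta> * (3*r)^4 = 324 * Mc \<beta> * r^4" by (simp add: power_mult_distrib)
      finally show ?thesis .
    qed
  qed
  also have "\<dots> = ennreal (324 * Mc \<beta> * r^4) * (\<integral>\<^sup>+y. ennreal (f y / \<alpha>) \<partial>hvol)"
    by (subst nn_integral_cmult[symmetric]) (measurable, simp add: mult.commute)
  also have "\<dots> \<le> ennreal (324 * Mc \<beta> * r^4) * 1"
  proof (intro mult_left_mono)
    show "(\<integral>\<^sup>+y. ennreal (f y / \<alpha>) \<partial>hvol) \<le> 1"
    proof (cases "\<alpha> = 0")
      case True thus ?thesis by simp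
    next
      case False
      have "(\<integral>\<^sup>+y. ennreal (f y / \<alpha>) \<partial>hvol) = ennreal (\<integral>y. f y / \<alpha> \<partial>hvol)"
        using fint f0 a0 by (intro nn_integral_eq_integral) auto
      also have "\<dots> = 1" using False al by simp
      finally show ?thesis by simp
    qed
  qed simp
  finally have I: "(\<integral>\<^sup>+x. indicator B x * ennreal (exp (4 * u x)) \<partial>hvol)
      \<le> E * (81 * emeasure hvol B) + E * ennreal (324 * Mc \<beta> * r^4)"
    by (simp add: mult_left_mono)
  have "ennreal (324 * Mc \<beta> * r^4) = ennreal (81 * Mc \<beta>) * ennreal (4 * r^4)"
    using Mc0 by (simp add: ennreal_mult[symmetric])
  also have "\<dots> \<le> ennreal (81 * Mc \<beta>) * emeasure hvol B"
    unfolding B_def by (intro mult_left_mono hball_lower r) simp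
  finally have K: "ennreal (324 * Mc \<beta> * r^4) \<le> ennreal (81 * Mc \<beta>) * emeasure hvol B" .
  have "E * (81 * emeasure hvol B) + E * ennreal (324 * Mc \<beta> * r^4)
      \<le> E * (81 * emeasure hvol B) + E * (ennreal (81 * Mc \<beta>) * emeasure hvol B)"
    by (intro add_left_mono mult_left_mono K) simp
  also have "\<dots> = E * (emeasure hvol B * ennreal (81 + 81 * Mc \<beta>))"
  proof -
    have e: "ennreal (81 + 81 * Mc \<beta>) = 81 + ennreal (81 * Mc \<beta>)"
      using Mc0 by (subst ennreal_plus) simp_all
    show ?thesis unfolding e by (simp add: algebra_simps)
  qed
  finally show ?thesis using I unfolding B_def E_def by simp
qed



theorem theorem1p2:
  fixes u :: "heis \<Rightarrow> real" and c1' :: real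
  assumes c1'_pos: "0 < c1'"
    and smooth: "smooth_heis u"
    and plh: "pluriharmonic u"
    and Qnonneg: "\<forall>x. 0 \<le> Qprime u x"
    and normal: "\<exists>C. \<forall>x.
        integrable hvol (\<lambda>y. ln (hnorm y / hnorm (hmult (hinv y) x)) * (Qprime u y * exp (4 * u y)))
        \<and> u x = (1 / c1') * (\<integral>y. ln (hnorm y / hnorm (hmult (hinv y) x)) * (Qprime u y * exp (4 * u y)) \<partial>hvol) + C"
    and total: "(\<integral>\<^sup>+ y. ennreal (Qprime u y * exp (4 * u y)) \<partial>hvol) < ennreal c1'"
  shows "A1_weight (\<lambda>x. exp (4 * u x))"
proof -
  define f where "f y = Qprime u y * exp (4 * u y)" for y
  have f0: "\<And>y. 0 \<le> f y" unfolding f_def by (intro mult_nonneg_nonneg Qnonneg[rule_format]) simp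
  obtain C where nC0: "\<forall>x. integrable hvol (\<lambda>y. ln (hnorm y / hnorm (hmult (hinv y) x)) * (Qprime u y * exp (4 * u y)))
        \<and> u x = (1 / c1') * (\<integral>y. ln (hnorm y / hnorm (hmult (hinv y) x)) * (Qprime u y * exp (4 * u y)) \<partial>hvol) + C"
    using normal by blast
  have nC: "\<And>x. integrable hvol (\<lambda>y. ln (hnorm y / hdist y x) * f y)"
    unfolding hdist_def f_def by (rule conjunct1[OF spec[OF nC0]])
  have uC: "\<And>x. u x = (1/c1') * (\<integral>y. ln (hnorm y / hdist y x) * f y \<partial>hvol) + C"
    unfolding hdist_def f_def by (rule conjunct2[OF spec[OF nC0]])
  have m1: "(\<lambda>y. ln (hnorm y / hdist y (0,0,1)) * f y) \<in> borel_measurable borel"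
    using borel_measurable_integrable[OF nC[of "(0,0,1)"]] by (simp only: measurable_hvol1)
  have m2: "(\<lambda>y. ln (hnorm y / hdist y (0,0,-1)) * f y) \<in> borel_measurable borel"
    using borel_measurable_integrable[OF nC[of "(0,0,-1)"]] by (simp only: measurable_hvol1)
  have fm[measurable]: "f \<in> borel_measurable borel"
    by (rule f_meas_trick[OF m1[unfolded hdist_def] m2[unfolded hdist_def]])
  have udiff: "\<And>p. u differentiable (at p)"
    using smooth[unfolded smooth_heis_def, rule_format, of "[]"] by simp
  have ucont: "continuous_on UNIV u"
    by (intro continuous_at_imp_continuous_on ballI differentiable_imp_continuous_within udiff)
  have um[measurable]: "u \<in> borel_measurable borel" by (rule borel_measurable_continuous_onI[OF ucont])
  have ft: "(\<integral>\<^sup>+ y. ennreal (f y) \<partial>hvol) < top"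
    unfolding f_def using total ennreal_less_top[of c1'] by (rule order.strict_trans)
  have fint: "integrable hvol f"
    by (rule integrableI_nonneg) (use fm f0 ft in \<open>simp_all add: infinity_ennreal_def\<close>)
  define \<alpha> where "\<alpha> = integral\<^sup>L hvol f"
  have a0: "0 \<le> \<alpha>" unfolding \<alpha>_def using f0 by simp
  have "ennreal \<alpha> = (\<integral>\<^sup>+ y. ennreal (f y) \<partial>hvol)"
    using nn_integral_eq_integral[OF fint] f0 by (simp add: \<alpha>_def)
  hence "ennreal \<alpha> < ennreal c1'" using total by (simp add: f_def)
  hence ac: "\<alpha> < c1'" using a0 by (simp add: ennreal_less_iff)
  define \<beta> where "\<beta> = 4 * \<alpha> / c1'"
  have b0: "0 \<le> \<beta>" using a0 c1'_pos by (simp add: \<beta>_def)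
  have b4: "\<beta> < 4" using ac c1'_pos by (simp add: \<beta>_def field_simps)
  define C0 where "C0 = 81 + 81 * Mc \<beta>"
  have C0pos: "0 < C0" using Mc_pos[OF b0 b4] by (simp add: C0_def)
  show ?thesis unfolding A1_weight_def
  proof (intro conjI allI impI exI[of _ C0])
    fix p :: heis
    show "0 \<le> exp (4 * u p)" by simp
  next
    fix K :: "heis set" assume K: "compact K"
    have cK: "continuous_on K (\<lambda>x. exp (4 * u x))"
      by (intro continuous_intros continuous_on_subset[OF ucont]) simp
    have "integrable lborel (\<lambda>x. indicator K x *\<^sub>R exp (4 * u x))"
      by (rule borel_integrable_compact[OF K cK])
    hence i4: "integrable lborel (\<lambda>x. 4 *\<^sub>R (indicator K x *\<^sub>R exp (4 * u x)))"
      by (rule integrable_scaleR_right)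
    have Km[measurable]: "K \<in> sets borel" using K by (simp add: compact_imp_closed borel_closed)
    have "integrable (density lborel (\<lambda>x. ennreal ((\<lambda>_. 4) x))) (\<lambda>x. indicator K x *\<^sub>R exp (4 * u x))"
      using i4 by (subst integrable_density) simp_all
    thus "set_integrable hvol K (\<lambda>x. exp (4 * u x))"
      unfolding set_integrable_def hvol_def by simp
  next
    fix p :: heis and r :: real assume r: "0 < r"
    define B where "B = hball p r"
    have Bm[measurable]: "B \<in> sets borel" unfolding B_def by measurable
    have pB: "p \<in> B" using r by (simp add: B_def hball_hd hd_self)
    have mu_up: "emeasure hvol B \<le> ennreal (32 * r^4)" unfolding B_def by (rule hball_upper[OF r])
    have mu_lo: "ennreal (4 * r^4) \<le> emeasure hvol B" unfolding B_def by (rule hball_lower[OF r])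
    define m where "m = measure hvol B"
    have fin: "emeasure hvol B \<noteq> \<infinity>" using mu_up by (auto simp: top_unique)
    have mu: "emeasure hvol B = ennreal m" unfolding m_def using fin by (simp add: emeasure_eq_ennreal_measure)
    have m0: "0 < m"
    proof -
      have "ennreal 0 < ennreal (4 * r^4)" using r by simp
      also have "\<dots> \<le> ennreal m" using mu_lo mu by simp
      finally show ?thesis by (simp add: ennreal_less_iff)
    qed
    define I where "I = set_lebesgue_integral hvol B (\<lambda>x. exp (4 * u x))"
    have I_eq: "I = enn2real (\<integral>\<^sup>+x. ennreal (indicator B x * exp (4 * u x)) \<partial>hvol)"
      unfolding I_def set_lebesgue_integral_def by (subst integral_eq_nn_integral) simp_all
    have bound: "I / m \<le> C0 * exp (4 * u x')" if x': "x' \<in> B" for x'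
    proof -
      have x'd: "hdist p x' < r" using x' by (simp add: B_def hball_hd)
      have "(\<integral>\<^sup>+x. ennreal (indicator B x * exp (4 * u x)) \<partial>hvol) = (\<integral>\<^sup>+x. indicator B x * ennreal (exp (4 * u x)) \<partial>hvol)"
        by (intro nn_integral_cong) (simp add: indicator_def)
      also have "\<dots> \<le> ennreal (exp (4 * u x')) * (emeasure hvol (hball p r) * ennreal (81 + 81 * Mc \<beta>))"
        unfolding B_def by (rule integrate[OF f0 fm fint nC uC um c1'_pos \<alpha>_def \<beta>_def b4 r x'd])
      also have "\<dots> = ennreal (exp (4 * u x') * m * C0)"
        using mu m0 C0pos by (simp add: B_def C0_def ennreal_mult[symmetric] mult.assoc)
      finally have "I \<le> exp (4 * u x') * m * C0"
        unfolding I_eq using m0 C0pos by (intro enn2real_leI) simp_all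
      thus ?thesis using m0 by (simp add: divide_le_eq mult.commute mult.left_commute)
    qed
    have "I / m / C0 \<le> (INF q\<in>B. exp (4 * u q))"
    proof (rule cINF_greatest)
      show "B \<noteq> {}" using pB by auto
      fix x' assume "x' \<in> B"
      hence "I / m \<le> C0 * exp (4 * u x')" by (rule bound)
      thus "I / m / C0 \<le> exp (4 * u x')" by (subst pos_divide_le_eq[OF C0pos]) (simp add: mult.commute)
    qed
    hence "I / m \<le> C0 * (INF q\<in>B. exp (4 * u q))"
      by (subst (asm) pos_divide_le_eq[OF C0pos]) (simp add: mult.commute)
    thus "set_lebesgue_integral hvol (hball p r) (\<lambda>x. exp (4 * u x)) / measure hvol (hball p r)
        \<le> C0 * (INF q\<in>hball p r. exp (4 * u q))"
      by (simp add: I_def m_def B_def)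
  qed
qed


end
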